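(* Let $K_1,K_2\subset\mathbb{R}^n$ be closed with $T_{K_1}(x)=T^a_{K_1}(x)$ for all $x\in\partial K_1\cap\partial K_2$. Let $x_o\in\partial K_1\cap\partial K_2$ and assume there exist a neighborhood $\mathcal{N}(x_o)$ of $x_o$, $c>0$ and $\alpha\in[0,1)$ such that for all $(x_1,x_2)\in((\partial K_1\setminus K_2)\cap\mathcal{N}(x_o))\times((\partial K_2\setminus K_1)\cap\mathcal{N}(x_o))$ there exist $(v_1,v_2)\in T_{K_1}(x_1)\times T_{K_2}(x_2)$ with $|(v_1,v_2)|\le c|x_1-x_2|$ and $$x_2-x_1\in(v_1-v_2)+\alpha|x_1-x_2|\mathbb{B}.$$ Then $$T_{K_1}(x_o)\cap T_{K_2}(x_o)=T_{K_1\cap K_2}(x_o)\quad\text{and}\quad T^a_{K_1}(x_o)\cap T^a_{K_2}(x_o)=T^a_{K_1\cap K_2}(x_o).$$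
   Context: $\mathbb{B}$ is the closed unit ball of $\mathbb{R}^n$. Contingent cone of a set $S$ at $x\in\operatorname{cl}(S)$: $T_S(x)=\{v: \exists t_i\to 0^+, \exists v_i\to v,\ x+t_iv_i\in S\}$. Adjacent cone: $T^a_S(x)=\{v: \forall t_i\to 0^+, \exists v_i\to v,\ x+t_iv_i\in S\}$. *)

theory Defs
  imports "HOL-Analysis.Analysis"
begin

definition contingent_cone :: "'a::real_normed_vector set \<Rightarrow> 'a \<Rightarrow> 'a set" where
  "contingent_cone S x = {v. \<exists>t w. (\<forall>i. t i > 0) \<and> t \<longlonglongrightarrow> 0 \<and> w \<longlonglongrightarrow> v \<and>
       (\<forall>i. x + t i *\<^sub>R w i \<in> S)}"

definition adjacent_cone :: "'a::real_normed_vector set \<Rightarrow> 'a \<Rightarrow> 'a set" where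
  "adjacent_cone S x = {v. \<forall>t. (\<forall>i. t i > 0) \<and> t \<longlonglongrightarrow> 0 \<longrightarrow>
       (\<exists>w. w \<longlonglongrightarrow> v \<and> (\<forall>i. x + t i *\<^sub>R w i \<in> S))}"

end

theory Submission
  imports Defs
begin


lemma minimizer:
  fixes K1 K2 :: "'a::euclidean_space set"
  assumes "closed K1" "closed K2" "y1 \<in> K1" "y2 \<in> K2" "l > 0"
  shows "\<exists>z1\<in>K1. \<exists>z2\<in>K2. norm (z1 - z2) + l * (norm (z1 - y1) + norm (z2 - y2)) \<le> norm (y1 - y2)
     \<and> (\<forall>w1\<in>K1. \<forall>w2\<in>K2. norm (z1 - z2) + l * (norm (z1 - y1) + norm (z2 - y2))
           \<le> norm (w1 - w2) + l * (norm (w1 - y1) + norm (w2 - y2)))"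
proof -
  define f where "f = (\<lambda>p::'a\<times>'a. norm (fst p - snd p) + l * (norm (fst p - y1) + norm (snd p - y2)))"
  define R where "R = norm (y1 - y2) / l"
  define S where "S = (cball y1 R \<inter> K1) \<times> (cball y2 R \<inter> K2)"
  have R0: "R \<ge> 0" using assms by (simp add: R_def)
  have "compact S" unfolding S_def
    by (intro compact_Times compact_Int_closed) (auto simp: assms)
  moreover have "(y1, y2) \<in> S" using assms R0 by (auto simp: S_def)
  moreover have "continuous_on S f" unfolding f_def by (intro continuous_intros)
  ultimately obtain z where zS: "z \<in> S" and zmin: "\<forall>w\<in>S. f z \<le> f w"
    using continuous_attains_inf[of S f] by blast
  have fy: "f z \<le> norm (y1 - y2)" using zmin \<open>(y1,y2) \<in> S\<close> by (auto simp: f_def)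
  have glob: "f z \<le> f (w1, w2)" if "w1 \<in> K1" "w2 \<in> K2" for w1 w2
  proof (cases "(w1, w2) \<in> S")
    case True then show ?thesis using zmin by blast
  next
    case False
    then have "norm (w1 - y1) > R \<or> norm (w2 - y2) > R" using that
      by (auto simp: S_def dist_norm norm_minus_commute)
    then have "norm (w1 - y1) + norm (w2 - y2) > R"
      using norm_ge_zero[of "w1 - y1"] norm_ge_zero[of "w2 - y2"] by linarith
    then have "l * (norm (w1 - y1) + norm (w2 - y2)) > l * R"
      using assms(5) by (rule mult_strict_left_mono)
    moreover have "l * R = norm (y1 - y2)" using assms(5) by (simp add: R_def)
    ultimately have "l * (norm (w1 - y1) + norm (w2 - y2)) > norm (y1 - y2)" by simp
    then have "f (w1, w2) > norm (y1 - y2)" unfolding f_def fst_conv snd_conv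
      using norm_ge_zero[of "w1 - w2"] by linarith
    then show ?thesis using fy by simp
  qed
  show ?thesis
    apply (rule bexI[of _ "fst z"], rule bexI[of _ "snd z"])
    using fy glob zS by (auto simp: f_def S_def)
qed

lemma first_order:
  fixes a v :: "'a::real_inner"
  assumes "a \<noteq> 0" "\<forall>k. t k > 0" "t \<longlonglongrightarrow> 0" "u \<longlonglongrightarrow> v"
    and "\<forall>k. norm (a + t k *\<^sub>R u k) + l * t k * norm (u k) \<ge> norm a"
  shows "inner a v / norm a + l * norm v \<ge> 0"
proof -
  define d where "d = norm a"
  have d0: "d > 0" using assms by (simp add: d_def)
  have key: "0 \<le> inner a (u k) / d + t k * (norm (u k))^2 / (2*d) + l * norm (u k)" for k
  proof -
    let ?n = "norm (a + t k *\<^sub>R u k)"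
    have sq: "?n^2 = d^2 + 2 * t k * inner a (u k) + (t k)^2 * (norm (u k))^2"
    proof -
      have "?n^2 = inner (a + t k *\<^sub>R u k) (a + t k *\<^sub>R u k)" by (rule power2_norm_eq_inner)
      also have "\<dots> = inner a a + 2 * t k * inner a (u k) + (t k)^2 * inner (u k) (u k)"
        by (simp add: inner_add_left inner_add_right inner_commute algebra_simps power2_eq_square)
      also have "\<dots> = d^2 + 2 * t k * inner a (u k) + (t k)^2 * (norm (u k))^2"
        by (simp only: d_def dot_square_norm)
      finally show ?thesis .
    qed
    have "?n \<le> (d^2 + ?n^2) / (2*d)"
    proof -
      have "0 \<le> (d - ?n)^2" by simp
      then have "2*d*?n \<le> d^2 + ?n^2" by (simp add: power2_eq_square algebra_simps)
      then show ?thesis using d0 by (simp add: field_simps)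
    qed
    also have "\<dots> = d + t k * (inner a (u k) / d + t k * (norm (u k))^2 / (2*d))"
      unfolding sq using d0 by (simp add: field_simps power2_eq_square)
    finally have "d \<le> d + t k * (inner a (u k) / d + t k * (norm (u k))^2 / (2*d)) + l * t k * norm (u k)"
      using assms(5) unfolding d_def by (smt (verit))
    then have "0 \<le> t k * (inner a (u k) / d + t k * (norm (u k))^2 / (2*d) + l * norm (u k))"
      by (simp add: algebra_simps)
    moreover have "t k > 0" using assms(2) by blast
    ultimately show ?thesis by (simp add: zero_le_mult_iff)
  qed
  have "(\<lambda>k. inner a (u k) / d + t k * (norm (u k))^2 / (2*d) + l * norm (u k))
     \<longlonglongrightarrow> inner a v / d + 0 * (norm v)^2 / (2*d) + l * norm v"
    using d0 by (intro tendsto_intros assms) auto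
  then have "0 \<le> inner a v / d + 0 * (norm v)^2 / (2*d) + l * norm v"
    using key by (intro LIMSEQ_le_const) auto
  then show ?thesis by (simp add: d_def)
qed

lemma key:
  fixes K1 K2 :: "'a::euclidean_space set"
  assumes cl1: "closed K1" and cl2: "closed K2"
    and "open N" and "xo \<in> N" and c0: "c > 0" and a0: "0 \<le> \<alpha>" and a1: "\<alpha> < 1"
    and hyp: "\<forall>x1 \<in> (frontier K1 - K2) \<inter> N. \<forall>x2 \<in> (frontier K2 - K1) \<inter> N.
           \<exists>v1 \<in> contingent_cone K1 x1. \<exists>v2 \<in> contingent_cone K2 x2.
             norm (v1, v2) \<le> c * norm (x1 - x2) \<and>
             x2 - x1 \<in> (\<lambda>b. (v1 - v2) + b) ` ((\<lambda>b. (\<alpha> * norm (x1 - x2)) *\<^sub>R b) ` cball 0 1)"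
  shows "\<exists>\<rho>>0. \<exists>l>0. \<forall>y1\<in>K1. \<forall>y2\<in>K2. dist y1 xo < \<rho> \<longrightarrow> dist y2 xo < \<rho> \<longrightarrow>
            (\<exists>z\<in>K1 \<inter> K2. norm (z - y1) \<le> norm (y1 - y2) / l)"
proof -
  obtain e where e0: "e > 0" and eN: "ball xo e \<subseteq> N"
    using assms(3,4) open_contains_ball by blast
  define l where "l = min (1/2) ((1-\<alpha>)/(4*c))"
  have l0: "l > 0" using c0 a1 by (simp add: l_def)
  have lh: "l \<le> 1/2" by (simp add: l_def)
  have lc: "4*c*l \<le> 1-\<alpha>" using c0 by (simp add: l_def min_def field_simps)
  define \<rho> where "\<rho> = e*l/4"
  have r0: "\<rho> > 0" using e0 l0 by (simp add: \<rho>_def)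
  show ?thesis
  proof (rule exI[of _ \<rho>], rule conjI[OF r0], rule exI[of _ l], intro conjI l0 ballI impI)
    fix y1 y2 assume y1: "y1 \<in> K1" and y2: "y2 \<in> K2" and dy1: "dist y1 xo < \<rho>" and dy2: "dist y2 xo < \<rho>"
    define F where "F = (\<lambda>w1 w2. norm (w1 - w2) + l * (norm (w1 - y1) + norm (w2 - y2)))"
    obtain z1 z2 where z1: "z1 \<in> K1" and z2: "z2 \<in> K2" and Fz: "F z1 z2 \<le> norm (y1 - y2)"
      and Fmin: "\<And>w1 w2. w1 \<in> K1 \<Longrightarrow> w2 \<in> K2 \<Longrightarrow> F z1 z2 \<le> F w1 w2"
      using minimizer[OF cl1 cl2 y1 y2 l0] unfolding F_def by blast
    define d0 where "d0 = norm (y1 - y2)"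
    define n1 where "n1 = norm (z1 - y1)"
    define n2 where "n2 = norm (z2 - y2)"
    define d where "d = norm (z1 - z2)"
    have Fz_eq: "F z1 z2 = d + l * (n1 + n2)" by (simp add: F_def d_def n1_def n2_def)
    have n1g: "n1 \<ge> 0" "n2 \<ge> 0" "d \<ge> 0" by (auto simp: n1_def n2_def d_def)
    have ln: "l * n1 \<ge> 0" "l * n2 \<ge> 0" "l * (n1 + n2) = l * n1 + l * n2"
      using l0 n1g by (auto simp: distrib_left)
    have "l * n1 \<le> d0" using Fz Fz_eq n1g ln unfolding d0_def by linarith
    then have bn1: "n1 \<le> d0 / l" using l0 by (simp add: field_simps)
    have "l * n2 \<le> d0" using Fz Fz_eq n1g ln unfolding d0_def by linarith
    then have bn2: "n2 \<le> d0 / l" using l0 by (simp add: field_simps)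
    show "\<exists>z\<in>K1 \<inter> K2. norm (z - y1) \<le> norm (y1 - y2) / l"
    proof (cases "d = 0")
      case True
      then have "z1 = z2" by (simp add: d_def)
      then show ?thesis using z1 z2 bn1 by (auto simp: n1_def d0_def)
    next
      case False
      then have dpos: "d > 0" using n1g by simp
      have ld: "l * d < d" using dpos lh by simp
      have z1K2: "z1 \<notin> K2"
      proof
        assume "z1 \<in> K2"
        then have "F z1 z2 \<le> F z1 z1" using Fmin z1 by blast
        moreover have "norm (z1 - y2) \<le> d + n2"
          using norm_triangle_ineq[of "z1 - z2" "z2 - y2"] by (simp add: d_def n2_def)
        then have "l * norm (z1 - y2) \<le> l * (d + n2)" using l0 by simp
        moreover have "F z1 z1 = l * n1 + l * norm (z1 - y2)" by (simp add: F_def n1_def distrib_left)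
        moreover have "l * (d + n2) = l * d + l * n2" by (simp add: distrib_left)
        ultimately show False using ld ln unfolding Fz_eq by linarith
      qed
      have z2K1: "z2 \<notin> K1"
      proof
        assume "z2 \<in> K1"
        then have "F z1 z2 \<le> F z2 z2" using Fmin z2 by blast
        moreover have "norm (z2 - y1) \<le> d + n1"
          using norm_triangle_ineq[of "z2 - z1" "z1 - y1"] by (simp add: d_def n1_def norm_minus_commute)
        then have "l * norm (z2 - y1) \<le> l * (d + n1)" using l0 by simp
        moreover have "F z2 z2 = l * norm (z2 - y1) + l * n2" by (simp add: F_def n2_def distrib_left)
        moreover have "l * (d + n1) = l * d + l * n1" by (simp add: distrib_left)
        ultimately show False using ld ln unfolding Fz_eq by linarith
      qed
      have z1f: "z1 \<in> frontier K1"
      proof -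
        have "z1 \<notin> interior K1"
        proof
          assume "z1 \<in> interior K1"
          then obtain r where r0: "r > 0" and rb: "ball z1 r \<subseteq> K1" using mem_interior by blast
          define s where "s = min (1/2) (r/(2*d))"
          have s0: "s > 0" "s \<le> 1/2" using r0 dpos by (auto simp: s_def)
          have sd: "s * d \<le> r/2" using dpos by (simp add: s_def min_def field_simps)
          define w where "w = z1 + s *\<^sub>R (z2 - z1)"
          have "dist z1 w = s * d" using s0 by (simp add: w_def dist_norm d_def norm_minus_commute)
          then have "w \<in> K1" using rb sd r0 by auto
          then have "F z1 z2 \<le> F w z2" using Fmin z2 by blast
          moreover have "w - z2 = (1 - s) *\<^sub>R (z1 - z2)" by (simp add: w_def algebra_simps)
          then have "norm (w - z2) = (1 - s) * d" using s0 by (simp add: d_def)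
          moreover have "norm (w - y1) \<le> n1 + s * d"
          proof -
            have eq: "w - y1 = (z1 - y1) + s *\<^sub>R (z2 - z1)" by (simp add: w_def algebra_simps)
            have nr: "norm (s *\<^sub>R (z2 - z1)) = s * d" using s0 by (simp add: d_def norm_minus_commute)
            have "norm (w - y1) \<le> norm (z1 - y1) + norm (s *\<^sub>R (z2 - z1))"
              unfolding eq by (rule norm_triangle_ineq)
            then show ?thesis using nr by (simp add: n1_def)
          qed
          then have "l * norm (w - y1) \<le> l * (n1 + s * d)" using l0 by simp
          moreover have "l * (s * d) < s * d" using s0 dpos lh by simp
          moreover have "F w z2 = norm (w - z2) + l * norm (w - y1) + l * n2" by (simp add: F_def n2_def distrib_left)
          moreover have "l * (n1 + s * d) = l * n1 + l * (s * d)" by (simp add: distrib_left)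
          moreover have "(1 - s) * d = d - s * d" by (simp add: algebra_simps)
          ultimately show False using ln unfolding Fz_eq by linarith
        qed
        then show ?thesis using z1 cl1 by (simp add: frontier_def)
      qed
      have z2f: "z2 \<in> frontier K2"
      proof -
        have "z2 \<notin> interior K2"
        proof
          assume "z2 \<in> interior K2"
          then obtain r where r0: "r > 0" and rb: "ball z2 r \<subseteq> K2" using mem_interior by blast
          define s where "s = min (1/2) (r/(2*d))"
          have s0: "s > 0" "s \<le> 1/2" using r0 dpos by (auto simp: s_def)
          have sd: "s * d \<le> r/2" using dpos by (simp add: s_def min_def field_simps)
          define w where "w = z2 + s *\<^sub>R (z1 - z2)"
          have "dist z2 w = s * d" using s0 by (simp add: w_def dist_norm d_def norm_minus_commute)
          then have "w \<in> K2" using rb sd r0 by auto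
          then have "F z1 z2 \<le> F z1 w" using Fmin z1 by blast
          moreover have "z1 - w = (1 - s) *\<^sub>R (z1 - z2)" by (simp add: w_def algebra_simps)
          then have "norm (z1 - w) = (1 - s) * d" using s0 by (simp add: d_def)
          moreover have "norm (w - y2) \<le> n2 + s * d"
          proof -
            have eq: "w - y2 = (z2 - y2) + s *\<^sub>R (z1 - z2)" by (simp add: w_def algebra_simps)
            have nr: "norm (s *\<^sub>R (z1 - z2)) = s * d" using s0 by (simp add: d_def norm_minus_commute)
            have "norm (w - y2) \<le> norm (z2 - y2) + norm (s *\<^sub>R (z1 - z2))"
              unfolding eq by (rule norm_triangle_ineq)
            then show ?thesis using nr by (simp add: n2_def)
          qed
          then have "l * norm (w - y2) \<le> l * (n2 + s * d)" using l0 by simp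
          moreover have "l * (s * d) < s * d" using s0 dpos lh by simp
          moreover have "F z1 w = norm (z1 - w) + l * n1 + l * norm (w - y2)" by (simp add: F_def n1_def distrib_left)
          moreover have "l * (n2 + s * d) = l * n2 + l * (s * d)" by (simp add: distrib_left)
          moreover have "(1 - s) * d = d - s * d" by (simp add: algebra_simps)
          ultimately show False using ln unfolding Fz_eq by linarith
        qed
        then show ?thesis using z2 cl2 by (simp add: frontier_def)
      qed
      have d0b: "d0 < 2 * \<rho>"
        using dist_triangle[of y1 y2 xo] dy1 dy2 norm_minus_commute[of xo y2] by (simp add: d0_def dist_norm)
      have "d0 / l < 2 * \<rho> / l" using d0b l0 by (simp add: divide_strict_right_mono)
      also have "2 * \<rho> / l = e / 2" using l0 by (simp add: \<rho>_def)
      finally have d0l: "d0 / l < e / 2" .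
      have rho_e: "\<rho> \<le> e / 8" using lh e0 by (simp add: \<rho>_def)
      have z1N: "z1 \<in> N"
      proof -
        have "dist z1 xo \<le> n1 + dist y1 xo"
          using dist_triangle[of z1 xo y1] by (simp add: n1_def dist_norm)
        then have "dist xo z1 < e" using dist_commute[of xo z1] bn1 d0l dy1 rho_e e0 by linarith
        then show ?thesis using eN by auto
      qed
      have z2N: "z2 \<in> N"
      proof -
        have "dist z2 xo \<le> n2 + dist y2 xo"
          using dist_triangle[of z2 xo y2] by (simp add: n2_def dist_norm)
        then have "dist xo z2 < e" using dist_commute[of xo z2] bn2 d0l dy2 rho_e e0 by linarith
        then show ?thesis using eN by auto
      qed
      obtain v1 v2 where v1: "v1 \<in> contingent_cone K1 z1" and v2: "v2 \<in> contingent_cone K2 z2"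
        and vn: "norm (v1, v2) \<le> c * d"
        and vb: "z2 - z1 \<in> (\<lambda>b. (v1 - v2) + b) ` ((\<lambda>b. (\<alpha> * d) *\<^sub>R b) ` cball 0 1)"
        using hyp z1f z2f z1K2 z2K1 z1N z2N unfolding d_def by blast
      obtain b where bn: "norm b \<le> 1" and zb: "z2 - z1 = (v1 - v2) + (\<alpha> * d) *\<^sub>R b"
        using vb by auto
      define a where "a = z1 - z2"
      have na: "norm a = d" by (simp add: a_def d_def)
      have a_ne: "a \<noteq> 0" using dpos na by auto
      have fo1: "inner a v1 / norm a + l * norm v1 \<ge> 0"
      proof -
        obtain t u where t0: "\<forall>i. t i > 0" and tl: "t \<longlonglongrightarrow> 0" and ul: "u \<longlonglongrightarrow> v1"
          and tK: "\<forall>i. z1 + t i *\<^sub>R u i \<in> K1"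
          using v1 unfolding contingent_cone_def by blast
        have "norm (a + t k *\<^sub>R u k) + l * t k * norm (u k) \<ge> norm a" for k
        proof -
          have "F z1 z2 \<le> F (z1 + t k *\<^sub>R u k) z2" using Fmin tK z2 by blast
          moreover have "norm (z1 + t k *\<^sub>R u k - y1) \<le> n1 + t k * norm (u k)"
            using norm_triangle_ineq[of "z1 - y1" "t k *\<^sub>R u k"] t0
            by (simp add: n1_def algebra_simps less_imp_le)
          then have "l * norm (z1 + t k *\<^sub>R u k - y1) \<le> l * (n1 + t k * norm (u k))"
            using l0 by simp
          moreover have "norm (z1 + t k *\<^sub>R u k - z2) = norm (a + t k *\<^sub>R u k)"
          proof -
            have "z1 + t k *\<^sub>R u k - z2 = a + t k *\<^sub>R u k" by (simp add: a_def algebra_simps)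
            then show ?thesis by (simp only:)
          qed
          moreover have "F (z1 + t k *\<^sub>R u k) z2 = norm (z1 + t k *\<^sub>R u k - z2) + l * norm (z1 + t k *\<^sub>R u k - y1) + l * n2"
            by (simp add: F_def n2_def distrib_left)
          moreover have "l * (n1 + t k * norm (u k)) = l * n1 + l * t k * norm (u k)" by (simp add: algebra_simps)
          ultimately show ?thesis using ln unfolding Fz_eq na by linarith
        qed
        then show ?thesis using first_order[OF a_ne t0 tl ul] by blast
      qed
      have fo2: "inner (-a) v2 / norm (-a) + l * norm v2 \<ge> 0"
      proof -
        obtain t u where t0: "\<forall>i. t i > 0" and tl: "t \<longlonglongrightarrow> 0" and ul: "u \<longlonglongrightarrow> v2"
          and tK: "\<forall>i. z2 + t i *\<^sub>R u i \<in> K2"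
          using v2 unfolding contingent_cone_def by blast
        have "norm (-a + t k *\<^sub>R u k) + l * t k * norm (u k) \<ge> norm (-a)" for k
        proof -
          have "F z1 z2 \<le> F z1 (z2 + t k *\<^sub>R u k)" using Fmin tK z1 by blast
          moreover have "norm (z2 + t k *\<^sub>R u k - y2) \<le> n2 + t k * norm (u k)"
            using norm_triangle_ineq[of "z2 - y2" "t k *\<^sub>R u k"] t0
            by (simp add: n2_def algebra_simps less_imp_le)
          then have "l * norm (z2 + t k *\<^sub>R u k - y2) \<le> l * (n2 + t k * norm (u k))"
            using l0 by simp
          moreover have "norm (z1 - (z2 + t k *\<^sub>R u k)) = norm (-a + t k *\<^sub>R u k)"
          proof -
            have "z1 - (z2 + t k *\<^sub>R u k) = - (-a + t k *\<^sub>R u k)" by (simp add: a_def algebra_simps)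
            then show ?thesis by (metis norm_minus_cancel)
          qed
          moreover have "F z1 (z2 + t k *\<^sub>R u k) = norm (z1 - (z2 + t k *\<^sub>R u k)) + l * n1 + l * norm (z2 + t k *\<^sub>R u k - y2)"
            by (simp add: F_def n1_def distrib_left)
          moreover have "l * (n2 + t k * norm (u k)) = l * n2 + l * t k * norm (u k)" by (simp add: algebra_simps)
          ultimately show ?thesis using ln unfolding Fz_eq na norm_minus_cancel by linarith
        qed
        then show ?thesis using first_order[of "-a", OF _ t0 tl ul] a_ne by simp
      qed
      have sum: "inner a (v1 - v2) / d + l * (norm v1 + norm v2) \<ge> 0"
        using fo1 fo2 na by (simp add: inner_diff_right add_divide_distrib diff_divide_distrib algebra_simps)
      have aa: "inner a a = d * d" by (simp add: dot_square_norm na power2_eq_square)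
      have "v1 - v2 = - a - (\<alpha> * d) *\<^sub>R b" using zb by (simp add: a_def algebra_simps)
      then have ip: "inner a (v1 - v2) = - (d * d) - \<alpha> * d * inner a b"
        using aa by (simp add: inner_diff_right)
      have "inner a b \<ge> - d"
        using norm_cauchy_schwarz[of "-a" b] bn na n1g
      proof -
        have "\<bar>inner a b\<bar> \<le> norm a * norm b" by (rule Cauchy_Schwarz_ineq2)
        also have "\<dots> \<le> d" using bn na n1g by (simp add: mult_left_le)
        finally show ?thesis by linarith
      qed
      then have "\<alpha> * d * inner a b \<ge> \<alpha> * d * (-d)"
        using a0 n1g by (intro mult_left_mono) auto
      then have "inner a (v1 - v2) \<le> - (1 - \<alpha>) * (d * d)" using ip by (simp add: algebra_simps)
      then have t1: "inner a (v1 - v2) / d \<le> - (1 - \<alpha>) * d" using dpos by (simp add: field_simps)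
      have "norm v1 + norm v2 \<le> 2 * (c * d)"
        using norm_fst_le[of v1 v2] norm_snd_le[of v2 v1] vn by simp
      then have "l * (norm v1 + norm v2) \<le> l * (2 * (c * d))" using l0 by simp
      also have "\<dots> = (4 * c * l) * d / 2" by simp
      also have "\<dots> \<le> (1 - \<alpha>) * d / 2" using lc dpos by (simp add: divide_right_mono)
      finally have t2: "l * (norm v1 + norm v2) \<le> (1 - \<alpha>) * d / 2" .
      have "(1 - \<alpha>) * d > 0" using a1 dpos by simp
      then show ?thesis using sum t1 t2 by linarith
    qed
  qed
qed

lemma combine:
  fixes K1 K2 :: "'a::euclidean_space set"
  assumes keyc: "\<forall>y1\<in>K1. \<forall>y2\<in>K2. dist y1 xo < \<rho> \<longrightarrow> dist y2 xo < \<rho> \<longrightarrow>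
            (\<exists>z\<in>K1 \<inter> K2. norm (z - y1) \<le> norm (y1 - y2) / l)"
    and r0: "\<rho> > 0" and l0: "l > 0" and xo: "xo \<in> K1 \<inter> K2"
    and t0: "\<forall>i. t i > 0" and tl: "t \<longlonglongrightarrow> 0" and w1l: "w1 \<longlonglongrightarrow> v" and w2l: "w2 \<longlonglongrightarrow> v"
    and in1: "\<forall>i. xo + t i *\<^sub>R w1 i \<in> K1" and in2: "\<forall>i. xo + t i *\<^sub>R w2 i \<in> K2"
  shows "\<exists>w. w \<longlonglongrightarrow> v \<and> (\<forall>i. xo + t i *\<^sub>R w i \<in> K1 \<inter> K2)"
proof -
  define y1 where "y1 = (\<lambda>i. xo + t i *\<^sub>R w1 i)"
  define y2 where "y2 = (\<lambda>i. xo + t i *\<^sub>R w2 i)"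
  define P where "P = (\<lambda>i. dist (y1 i) xo < \<rho> \<and> dist (y2 i) xo < \<rho>)"
  have "\<forall>i. \<exists>z. z \<in> K1 \<inter> K2 \<and> (P i \<longrightarrow> norm (z - y1 i) \<le> norm (y1 i - y2 i) / l)"
  proof
    fix i show "\<exists>z. z \<in> K1 \<inter> K2 \<and> (P i \<longrightarrow> norm (z - y1 i) \<le> norm (y1 i - y2 i) / l)"
    proof (cases "P i")
      case True
      then show ?thesis using keyc in1 in2 unfolding P_def y1_def y2_def by blast
    next
      case False
      then show ?thesis using xo by blast
    qed
  qed
  then obtain Z where Z: "\<And>i. Z i \<in> K1 \<inter> K2" and ZP: "\<And>i. P i \<Longrightarrow> norm (Z i - y1 i) \<le> norm (y1 i - y2 i) / l"
    by metis
  define w where "w = (\<lambda>i. (1 / t i) *\<^sub>R (Z i - xo))"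
  have wZ: "xo + t i *\<^sub>R w i = Z i" for i
    using t0 by (simp add: w_def) (metis less_irrefl)
  have y1l: "y1 \<longlonglongrightarrow> xo + 0 *\<^sub>R v" unfolding y1_def by (intro tendsto_intros tl w1l)
  have y2l: "y2 \<longlonglongrightarrow> xo + 0 *\<^sub>R v" unfolding y2_def by (intro tendsto_intros tl w2l)
  have evP: "eventually P sequentially"
    using tendstoD[OF y1l r0] tendstoD[OF y2l r0] unfolding P_def
    by (auto elim: eventually_elim2)
  have "eventually (\<lambda>i. norm (w i - w1 i) \<le> norm (w1 i - w2 i) / l) sequentially"
    using evP
  proof (rule eventually_mono)
    fix i assume Pi: "P i"
    have tp: "t i > 0" using t0 by blast
    have "w i - w1 i = (1 / t i) *\<^sub>R (Z i - y1 i)"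
      using tp by (simp add: w_def y1_def algebra_simps)
    then have "norm (w i - w1 i) = norm (Z i - y1 i) / t i" using tp by simp
    also have "\<dots> \<le> (norm (y1 i - y2 i) / l) / t i" using ZP[OF Pi] tp by (intro divide_right_mono) auto
    also have "y1 i - y2 i = t i *\<^sub>R (w1 i - w2 i)" by (simp add: y1_def y2_def algebra_simps)
    then have "(norm (y1 i - y2 i) / l) / t i = norm (w1 i - w2 i) / l" using tp by simp
    finally show "norm (w i - w1 i) \<le> norm (w1 i - w2 i) / l" .
  qed
  moreover have "(\<lambda>i. norm (w1 i - w2 i) / l) \<longlonglongrightarrow> norm (v - v) / l"
    using l0 by (intro tendsto_intros w1l w2l) auto
  then have "(\<lambda>i. norm (w1 i - w2 i) / l) \<longlonglongrightarrow> 0" by simp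
  ultimately have "(\<lambda>i. w i - w1 i) \<longlonglongrightarrow> 0" by (rule Lim_null_comparison)
  then have "(\<lambda>i. (w i - w1 i) + w1 i) \<longlonglongrightarrow> 0 + v" by (intro tendsto_intros w1l)
  then have "w \<longlonglongrightarrow> v" by simp
  then show ?thesis using wZ Z by metis
qed

lemma cc_mono: "S \<subseteq> T \<Longrightarrow> contingent_cone S x \<subseteq> contingent_cone T x"
  unfolding contingent_cone_def by blast

lemma ac_mono: "S \<subseteq> T \<Longrightarrow> adjacent_cone S x \<subseteq> adjacent_cone T x"
  unfolding adjacent_cone_def by blast

theorem lemma1:
  fixes K1 K2 :: "(real ^ 'n) set" and xo :: "real ^ 'n"
  assumes "closed K1" and "closed K2"
    and "\<forall>x \<in> frontier K1 \<inter> frontier K2. contingent_cone K1 x = adjacent_cone K1 x"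
    and "xo \<in> frontier K1 \<inter> frontier K2"
    and "open N" and "xo \<in> N" and "c > 0" and "0 \<le> \<alpha>" and "\<alpha> < 1"
    and "\<forall>x1 \<in> (frontier K1 - K2) \<inter> N. \<forall>x2 \<in> (frontier K2 - K1) \<inter> N.
           \<exists>v1 \<in> contingent_cone K1 x1. \<exists>v2 \<in> contingent_cone K2 x2.
             norm (v1, v2) \<le> c * norm (x1 - x2) \<and>
             x2 - x1 \<in> (\<lambda>b. (v1 - v2) + b) ` ((\<lambda>b. (\<alpha> * norm (x1 - x2)) *\<^sub>R b) ` cball 0 1)"
  shows "contingent_cone K1 xo \<inter> contingent_cone K2 xo = contingent_cone (K1 \<inter> K2) xo
    \<and> adjacent_cone K1 xo \<inter> adjacent_cone K2 xo = adjacent_cone (K1 \<inter> K2) xo"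
proof -
  obtain \<rho> l where r0: "\<rho> > 0" and l0: "l > 0" and keyc: "\<forall>y1\<in>K1. \<forall>y2\<in>K2. dist y1 xo < \<rho> \<longrightarrow> dist y2 xo < \<rho> \<longrightarrow>
            (\<exists>z\<in>K1 \<inter> K2. norm (z - y1) \<le> norm (y1 - y2) / l)"
    using key[OF assms(1,2,5-10)] by blast
  have xo: "xo \<in> K1 \<inter> K2"
    using assms(4) assms(1,2) frontier_subset_closed by blast
  have ca: "contingent_cone K1 xo = adjacent_cone K1 xo" using assms(3,4) by blast
  have A: "contingent_cone K1 xo \<inter> contingent_cone K2 xo \<subseteq> contingent_cone (K1 \<inter> K2) xo"
  proof
    fix v assume v: "v \<in> contingent_cone K1 xo \<inter> contingent_cone K2 xo"
    then obtain t w2 where t0: "\<forall>i. t i > 0" and tl: "t \<longlonglongrightarrow> 0" and w2l: "w2 \<longlonglongrightarrow> v"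
      and in2: "\<forall>i. xo + t i *\<^sub>R w2 i \<in> K2"
      unfolding contingent_cone_def by blast
    have "v \<in> adjacent_cone K1 xo" using v ca by blast
    then obtain w1 where w1l: "w1 \<longlonglongrightarrow> v" and in1: "\<forall>i. xo + t i *\<^sub>R w1 i \<in> K1"
      using t0 tl unfolding adjacent_cone_def by blast
    obtain w where "w \<longlonglongrightarrow> v" "\<forall>i. xo + t i *\<^sub>R w i \<in> K1 \<inter> K2"
      using combine[OF keyc r0 l0 xo t0 tl w1l w2l in1 in2] by blast
    then show "v \<in> contingent_cone (K1 \<inter> K2) xo"
      unfolding contingent_cone_def using t0 tl by blast
  qed
  have B: "adjacent_cone K1 xo \<inter> adjacent_cone K2 xo \<subseteq> adjacent_cone (K1 \<inter> K2) xo"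
  proof
    fix v assume v: "v \<in> adjacent_cone K1 xo \<inter> adjacent_cone K2 xo"
    show "v \<in> adjacent_cone (K1 \<inter> K2) xo"
      unfolding adjacent_cone_def
    proof (intro CollectI allI impI)
      fix t :: "nat \<Rightarrow> real" assume tt: "(\<forall>i. t i > 0) \<and> t \<longlonglongrightarrow> 0"
      then have t0: "\<forall>i. t i > 0" and tl: "t \<longlonglongrightarrow> 0" by auto
      obtain w1 where w1l: "w1 \<longlonglongrightarrow> v" and in1: "\<forall>i. xo + t i *\<^sub>R w1 i \<in> K1"
        using v tt unfolding adjacent_cone_def by blast
      obtain w2 where w2l: "w2 \<longlonglongrightarrow> v" and in2: "\<forall>i. xo + t i *\<^sub>R w2 i \<in> K2"
        using v tt unfolding adjacent_cone_def by blast
      show "\<exists>w. w \<longlonglongrightarrow> v \<and> (\<forall>i. xo + t i *\<^sub>R w i \<in> K1 \<inter> K2)"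
        using combine[OF keyc r0 l0 xo t0 tl w1l w2l in1 in2] .
    qed
  qed
  have A2: "contingent_cone (K1 \<inter> K2) xo \<subseteq> contingent_cone K1 xo \<inter> contingent_cone K2 xo"
    using cc_mono[of "K1 \<inter> K2" K1 xo] cc_mono[of "K1 \<inter> K2" K2 xo] by blast
  have B2: "adjacent_cone (K1 \<inter> K2) xo \<subseteq> adjacent_cone K1 xo \<inter> adjacent_cone K2 xo"
    using ac_mono[of "K1 \<inter> K2" K1 xo] ac_mono[of "K1 \<inter> K2" K2 xo] by blast
  show ?thesis using A A2 B B2 by blast
qed
end
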